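(* Let $\Gamma_3^*\subseteq\mathbb{R}^7$ be the set of entropy vectors of triples of discrete random variables. Let $\mathbf{e}_1=[1,0,0,1,1,0,1]^\intercal$, $\mathbf{e}_2=[0,1,0,1,0,1,1]^\intercal$, $\mathbf{e}_3=[0,0,1,0,1,1,1]^\intercal$, $\mathbf{e}_{123'}=[1,1,1,2,2,2,2]^\intercal$, and $\Theta=\mathrm{cone}(\mathbf{e}_1,\mathbf{e}_2,\mathbf{e}_3,\mathbf{e}_{123'})$. Let $\Theta^{\mathrm{in}}$ be the set of all vectors $\lambda_1\mathbf{e}_1+\lambda_2\mathbf{e}_2+\lambda_3\mathbf{e}_3+\lambda_{123'}\mathbf{e}_{123'}$ with $\lambda_1,\lambda_2,\lambda_3\ge 0$ and $\lambda_{123'}=\log m$ for some $m\in\mathbb{N}$. Then $\Theta^{\mathrm{in}}\subseteq\Theta\cap\Gamma_3^*$.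
   Context: All logarithms are base 2 and entropies are in bits. For a discrete random vector $(X_1,X_2,X_3)$, its entropy vector is $[h_1,h_2,h_3,h_{12},h_{13},h_{23},h_{123}]^\intercal\in\mathbb{R}^7$, where $h_\alpha$ is the Shannon entropy of $(X_i)_{i\in\alpha}$. *)

theory Defs
  imports "HOL-Analysis.Analysis" "HOL-Probability.Probability"
begin

(* Shannon entropy (bits) of a discrete distribution on a countable type;
   log 2 0 = 0 in Isabelle, so zero-probability points contribute 0. *)
definition entropy_terms :: "'a pmf \<Rightarrow> 'a \<Rightarrow> real" where
  "entropy_terms p = (\<lambda>x. - pmf p x * log 2 (pmf p x))"

definition finite_entropy :: "'a pmf \<Rightarrow> bool" where
  "finite_entropy p \<longleftrightarrow> entropy_terms p summable_on UNIV"

definition shannon_entropy :: "'a pmf \<Rightarrow> real" where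
  "shannon_entropy p = infsum (entropy_terms p) UNIV"

definition entropy_vector :: "(nat \<times> nat \<times> nat) pmf \<Rightarrow> real ^ 7" where
  "entropy_vector p = vector
     [shannon_entropy (map_pmf (\<lambda>(x,y,z). x) p),
      shannon_entropy (map_pmf (\<lambda>(x,y,z). y) p),
      shannon_entropy (map_pmf (\<lambda>(x,y,z). z) p),
      shannon_entropy (map_pmf (\<lambda>(x,y,z). (x,y)) p),
      shannon_entropy (map_pmf (\<lambda>(x,y,z). (x,z)) p),
      shannon_entropy (map_pmf (\<lambda>(x,y,z). (y,z)) p),
      shannon_entropy p]"

definition all_finite_entropy :: "(nat \<times> nat \<times> nat) pmf \<Rightarrow> bool" where
  "all_finite_entropy p \<longleftrightarrow>
     finite_entropy (map_pmf (\<lambda>(x,y,z). x) p) \<and>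
     finite_entropy (map_pmf (\<lambda>(x,y,z). y) p) \<and>
     finite_entropy (map_pmf (\<lambda>(x,y,z). z) p) \<and>
     finite_entropy (map_pmf (\<lambda>(x,y,z). (x,y)) p) \<and>
     finite_entropy (map_pmf (\<lambda>(x,y,z). (x,z)) p) \<and>
     finite_entropy (map_pmf (\<lambda>(x,y,z). (y,z)) p) \<and>
     finite_entropy p"

(* Gamma_3^*: entropy vectors of triples of discrete random variables
   (countable alphabets, encoded injectively into nat) *)
definition Gamma3_star :: "(real ^ 7) set" where
  "Gamma3_star = {entropy_vector p | p. all_finite_entropy p}"

definition e1 :: "real ^ 7" where "e1 = vector [1,0,0,1,1,0,1]"
definition e2 :: "real ^ 7" where "e2 = vector [0,1,0,1,0,1,1]"
definition e3 :: "real ^ 7" where "e3 = vector [0,0,1,0,1,1,1]"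
definition e123' :: "real ^ 7" where "e123' = vector [1,1,1,2,2,2,2]"

definition Theta :: "(real ^ 7) set" where
  "Theta = {l1 *\<^sub>R e1 + l2 *\<^sub>R e2 + l3 *\<^sub>R e3 + l4 *\<^sub>R e123' | l1 l2 l3 l4.
              l1 \<ge> 0 \<and> l2 \<ge> 0 \<and> l3 \<ge> 0 \<and> l4 \<ge> 0}"

definition Theta_in :: "(real ^ 7) set" where
  "Theta_in = {l1 *\<^sub>R e1 + l2 *\<^sub>R e2 + l3 *\<^sub>R e3 + log 2 (real m) *\<^sub>R e123' | l1 l2 l3 m.
              l1 \<ge> 0 \<and> l2 \<ge> 0 \<and> l3 \<ge> 0 \<and> (m::nat) \<ge> 1}"

end

theory Submission imports Defs "HOL-Real_Asymp.Real_Asymp" begin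

lemma ent_finite:
  assumes "finite S" "set_pmf p \<subseteq> S"
  shows "shannon_entropy p = (\<Sum>x\<in>S. entropy_terms p x)"
proof -
  have "infsum (entropy_terms p) UNIV = infsum (entropy_terms p) S"
    by (rule infsum_cong_neutral) (use assms in \<open>auto simp: entropy_terms_def set_pmf_iff\<close>)
  then show ?thesis using assms by (simp add: shannon_entropy_def)
qed

lemma fin_ent: "finite (set_pmf p) \<Longrightarrow> finite_entropy p"
  unfolding finite_entropy_def
  by (rule finite_nonzero_values_imp_summable_on)
     (auto intro: finite_subset[of _ "set_pmf p"] simp: entropy_terms_def set_pmf_iff)

lemma ent_inj:
  assumes "inj_on f (set_pmf p)" "finite (set_pmf p)"
  shows "shannon_entropy (map_pmf f p) = shannon_entropy p"
proof -
  have "shannon_entropy (map_pmf f p) = (\<Sum>y\<in>f ` set_pmf p. entropy_terms (map_pmf f p) y)"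
    using assms by (intro ent_finite) auto
  also have "\<dots> = (\<Sum>x\<in>set_pmf p. entropy_terms (map_pmf f p) (f x))"
    using assms by (simp add: sum.reindex)
  also have "\<dots> = (\<Sum>x\<in>set_pmf p. entropy_terms p x)"
    using assms by (intro sum.cong) (auto simp: entropy_terms_def pmf_map_inj)
  also have "\<dots> = shannon_entropy p" using assms by (intro ent_finite[symmetric]) auto
  finally show ?thesis .
qed

lemma ent_pair:
  assumes "finite (set_pmf p)" "finite (set_pmf q)"
  shows "shannon_entropy (pair_pmf p q) = shannon_entropy p + shannon_entropy q"
proof -
  let ?A = "set_pmf p" and ?B = "set_pmf q"
  have "shannon_entropy (pair_pmf p q) = (\<Sum>x\<in>?A \<times> ?B. entropy_terms (pair_pmf p q) x)"
    using assms by (intro ent_finite) auto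
  also have "\<dots> = (\<Sum>a\<in>?A. \<Sum>b\<in>?B. entropy_terms (pair_pmf p q) (a,b))"
    by (simp add: sum.cartesian_product)
  also have "\<dots> = (\<Sum>a\<in>?A. \<Sum>b\<in>?B. entropy_terms p a * pmf q b + pmf p a * entropy_terms q b)"
  proof (intro sum.cong refl)
    fix a b assume "a \<in> ?A" "b \<in> ?B"
    then have "pmf p a > 0" "pmf q b > 0" by (auto simp: set_pmf_iff less_le)
    then show "entropy_terms (pair_pmf p q) (a,b) = entropy_terms p a * pmf q b + pmf p a * entropy_terms q b"
      by (simp add: entropy_terms_def pmf_pair log_mult algebra_simps)
  qed
  also have "\<dots> = (\<Sum>a\<in>?A. entropy_terms p a * (\<Sum>b\<in>?B. pmf q b) + pmf p a * (\<Sum>b\<in>?B. entropy_terms q b))"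
    by (simp add: sum.distrib sum_distrib_left)
  also have "\<dots> = (\<Sum>a\<in>?A. entropy_terms p a) + (\<Sum>a\<in>?A. pmf p a) * (\<Sum>b\<in>?B. entropy_terms q b)"
    using assms by (simp add: sum_pmf_eq_1 sum.distrib sum_distrib_right[symmetric])
  also have "\<dots> = shannon_entropy p + shannon_entropy q"
    using assms by (simp add: sum_pmf_eq_1 ent_finite)
  finally show ?thesis .
qed

lemma ent_unif:
  assumes "finite S" "S \<noteq> {}"
  shows "shannon_entropy (pmf_of_set S) = log 2 (card S)"
proof -
  have c: "card S > 0" using assms by (simp add: card_gt_0_iff)
  have "shannon_entropy (pmf_of_set S) = (\<Sum>x\<in>S. entropy_terms (pmf_of_set S) x)"
    using assms by (intro ent_finite) auto
  also have "\<dots> = (\<Sum>x\<in>S. - (1 / card S) * log 2 (1 / card S))"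
    using assms by (intro sum.cong) (auto simp: entropy_terms_def)
  also have "\<dots> = log 2 (card S)" using c by (simp add: log_divide)
  finally show ?thesis .
qed

lemma ent_return: "shannon_entropy (return_pmf x) = 0"
  by (subst ent_finite[of "{x}"]) (auto simp: entropy_terms_def)

lemma pair_of_set:
  assumes "finite A" "A \<noteq> {}" "finite B" "B \<noteq> {}"
  shows "pair_pmf (pmf_of_set A) (pmf_of_set B) = pmf_of_set (A \<times> B)"
proof (rule pmf_eqI)
  fix x :: "'a \<times> 'b"
  obtain a b where "x = (a,b)" by force
  then show "pmf (pair_pmf (pmf_of_set A) (pmf_of_set B)) x = pmf (pmf_of_set (A \<times> B)) x"
    using assms by (simp add: pmf_pair indicator_def card_cartesian_product)
qed

lemma ent_split:
  assumes "\<And>a z. k (a,z) = f (g a, h z)" "inj f" "finite (set_pmf A)" "finite (set_pmf Z)"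
  shows "shannon_entropy (map_pmf k (pair_pmf A Z)) = shannon_entropy (map_pmf g A) + shannon_entropy (map_pmf h Z)"
proof -
  have "k = f \<circ> (\<lambda>(a,z). (g a, h z))" using assms(1) by (auto simp: fun_eq_iff)
  then have "map_pmf k (pair_pmf A Z) = map_pmf f (map_pmf (\<lambda>(a,z). (g a, h z)) (pair_pmf A Z))"
    by (simp add: pmf.map_comp)
  then have "map_pmf k (pair_pmf A Z) = map_pmf f (pair_pmf (map_pmf g A) (map_pmf h Z))"
    by (simp add: map_pair)
  then show ?thesis using assms
    by (simp add: ent_inj inj_on_subset[OF assms(2)] ent_pair)
qed



definition hb :: "real \<Rightarrow> real" where
  "hb t = - t * log 2 t - (1 - t) * log 2 (1 - t)"

lemma ent_bern:
  assumes "0 \<le> t" "t \<le> 1"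
  shows "shannon_entropy (bernoulli_pmf t) = hb t"
  using assms by (subst ent_finite[of UNIV]) (auto simp: UNIV_bool entropy_terms_def hb_def)

lemma hb_lim: "(hb \<longlongrightarrow> 0) (at_right 0)"
  unfolding hb_def log_def by real_asymp

lemma hb_exists:
  assumes "0 < c" "c \<le> 1"
  shows "\<exists>t. 0 \<le> t \<and> t \<le> 1 \<and> hb t = c"
proof -
  have "eventually (\<lambda>t. hb t < c) (at_right 0)"
    using hb_lim assms(1) by (simp add: order_tendstoD(2))
  then obtain b where b: "b > 0" "\<And>y. 0 < y \<Longrightarrow> y < b \<Longrightarrow> hb y < c"
    by (auto simp: eventually_at_right_field)
  define e where "e = min (b/2) (1/4)"
  have e: "0 < e" "e < b" "e \<le> 1/2" using b by (auto simp: e_def)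
  have "hb e \<le> c" using b(2)[of e] e by auto
  moreover have "c \<le> hb (1/2)" using assms by (simp add: hb_def log_divide)
  moreover have "continuous_on {e..1/2} hb"
    unfolding hb_def using e by (intro continuous_intros) auto
  ultimately obtain t where "t \<ge> e" "t \<le> 1/2" "hb t = c"
    using IVT'[of hb e c "1/2"] e by auto
  then show ?thesis using e by (intro exI[of _ t]) auto
qed

fun iter_pmf :: "nat \<Rightarrow> bool pmf \<Rightarrow> bool list pmf" where
  "iter_pmf 0 B = return_pmf []"
| "iter_pmf (Suc n) B = map_pmf (\<lambda>(b,bs). b # bs) (pair_pmf B (iter_pmf n B))"

lemma iter_fin: "finite (set_pmf (iter_pmf n B))"
  by (induction n) auto

lemma iter_ent: "shannon_entropy (iter_pmf n B) = n * shannon_entropy B"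
proof (induction n)
  case 0 then show ?case by (simp add: ent_return)
next
  case (Suc n)
  have "shannon_entropy (iter_pmf (Suc n) B) = shannon_entropy (pair_pmf B (iter_pmf n B))"
    by (simp, intro ent_inj) (auto simp: inj_on_def iter_fin)
  also have "\<dots> = shannon_entropy B + n * shannon_entropy B"
    using Suc by (simp add: ent_pair iter_fin)
  finally show ?case by (simp add: algebra_simps)
qed

lemma ent_exists:
  assumes "l \<ge> 0"
  shows "\<exists>A :: bool list pmf. finite (set_pmf A) \<and> shannon_entropy A = l"
proof (cases "l = 0")
  case True then show ?thesis by (intro exI[of _ "return_pmf []"]) (simp add: ent_return)
next
  case False
  define k where "k = nat \<lceil>l\<rceil>"
  have k: "real k \<ge> l" "k > 0" using False assms by (auto simp: k_def)
  then obtain t where t: "0 \<le> t" "t \<le> 1" "hb t = l / k"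
    using hb_exists[of "l / k"] False assms by (auto simp: field_simps)
  show ?thesis
    using t k by (intro exI[of _ "iter_pmf k (bernoulli_pmf t)"]) (simp add: iter_fin iter_ent ent_bern)
qed


lemma A_marg:
  assumes f: "finite (set_pmf A1)" "finite (set_pmf A2)" "finite (set_pmf A3)"
  defines "A \<equiv> pair_pmf A1 (pair_pmf A2 A3)"
  shows "shannon_entropy (map_pmf (\<lambda>a. fst a) A) = shannon_entropy A1"
    and "shannon_entropy (map_pmf (\<lambda>a. fst (snd a)) A) = shannon_entropy A2"
    and "shannon_entropy (map_pmf (\<lambda>a. snd (snd a)) A) = shannon_entropy A3"
    and "shannon_entropy (map_pmf (\<lambda>a. (fst a, fst (snd a))) A) = shannon_entropy A1 + shannon_entropy A2"
    and "shannon_entropy (map_pmf (\<lambda>a. (fst a, snd (snd a))) A) = shannon_entropy A1 + shannon_entropy A3"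
    and "shannon_entropy (map_pmf (\<lambda>a. snd a) A) = shannon_entropy A2 + shannon_entropy A3"
    and "shannon_entropy A = shannon_entropy A1 + shannon_entropy A2 + shannon_entropy A3"
proof -
  show "shannon_entropy (map_pmf (\<lambda>a. fst a) A) = shannon_entropy A1"
    unfolding A_def by (simp add: map_fst_pair_pmf)
  have "map_pmf (\<lambda>a. fst (snd a)) A = map_pmf fst (map_pmf snd A)" by (simp add: map_pmf_comp)
  then show "shannon_entropy (map_pmf (\<lambda>a. fst (snd a)) A) = shannon_entropy A2"
    unfolding A_def by (simp add: map_fst_pair_pmf map_snd_pair_pmf)
  have "map_pmf (\<lambda>a. snd (snd a)) A = map_pmf snd (map_pmf snd A)" by (simp add: map_pmf_comp)
  then show "shannon_entropy (map_pmf (\<lambda>a. snd (snd a)) A) = shannon_entropy A3"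
    unfolding A_def by (simp add: map_snd_pair_pmf)
  show "shannon_entropy (map_pmf (\<lambda>a. (fst a, fst (snd a))) A) = shannon_entropy A1 + shannon_entropy A2"
    unfolding A_def using f
    by (subst ent_split[where f=id and g=id and h=fst]) (auto simp: map_fst_pair_pmf)
  show "shannon_entropy (map_pmf (\<lambda>a. (fst a, snd (snd a))) A) = shannon_entropy A1 + shannon_entropy A3"
    unfolding A_def using f
    by (subst ent_split[where f=id and g=id and h=snd]) (auto simp: map_snd_pair_pmf)
  show "shannon_entropy (map_pmf (\<lambda>a. snd a) A) = shannon_entropy A2 + shannon_entropy A3"
    unfolding A_def using f by (simp add: map_snd_pair_pmf ent_pair)
  show "shannon_entropy A = shannon_entropy A1 + shannon_entropy A2 + shannon_entropy A3"
    unfolding A_def using f by (simp add: ent_pair)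
qed

lemma modcancel_aux:
  fixes a b c m :: nat
  assumes "(a+b) mod m = (a+c) mod m" "b \<le> c" "c < m"
  shows "b = c"
proof -
  have "m dvd (a+c) - (a+b)" using assms mod_eq_dvd_iff_nat[of "a+b" "a+c" m] by simp
  then have d: "m dvd c - b" by simp
  show ?thesis
  proof (rule ccontr)
    assume "b \<noteq> c"
    then have "c - b > 0" using assms by simp
    then have "m \<le> c - b" using d by (simp add: dvd_imp_le)
    then show False using assms by simp
  qed
qed
lemma modcancel:
  fixes a b c m :: nat
  assumes "(a+b) mod m = (a+c) mod m" "b < m" "c < m"
  shows "b = c"
  using modcancel_aux[of a b m c] modcancel_aux[of a c m b] assms by (cases "b \<le> c") auto

lemma Z_marg:
  fixes m :: nat
  assumes m: "m \<ge> 1"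
  defines "U \<equiv> pmf_of_set {0..<m}"
  defines "Z \<equiv> map_pmf (\<lambda>(a,b). (a, b, (a + b) mod m)) (pair_pmf U U)"
  shows "shannon_entropy (map_pmf (\<lambda>a. fst a) Z) = log 2 m"
    and "shannon_entropy (map_pmf (\<lambda>a. fst (snd a)) Z) = log 2 m"
    and "shannon_entropy (map_pmf (\<lambda>a. snd (snd a)) Z) = log 2 m"
    and "shannon_entropy (map_pmf (\<lambda>a. (fst a, fst (snd a))) Z) = 2 * log 2 m"
    and "shannon_entropy (map_pmf (\<lambda>a. (fst a, snd (snd a))) Z) = 2 * log 2 m"
    and "shannon_entropy (map_pmf (\<lambda>a. snd a) Z) = 2 * log 2 m"
    and "shannon_entropy Z = 2 * log 2 m"
proof -
  define M where "M = {0..<m}"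
  define S2 where "S2 = M \<times> M"
  have M: "finite M" "M \<noteq> {}" using m by (auto simp: M_def)
  have S2: "finite S2" "S2 \<noteq> {}" using M by (auto simp: S2_def)
  have UU: "pair_pmf U U = pmf_of_set S2" unfolding U_def S2_def M_def[symmetric]
    using M by (simp add: pair_of_set)
  have HU: "shannon_entropy U = log 2 m" unfolding U_def using m by (subst ent_unif) auto
  have cS2: "card S2 = m * m" by (simp add: S2_def M_def card_cartesian_product)
  have inj2: "shannon_entropy (map_pmf q (pair_pmf U U)) = 2 * log 2 m" if "inj_on q S2" for q :: "nat \<times> nat \<Rightarrow> 'x"
  proof -
    have "shannon_entropy (map_pmf q (pair_pmf U U)) = shannon_entropy (pair_pmf U U)"
      using that S2 by (intro ent_inj) (auto simp: UU)
    also have "\<dots> = log 2 (card S2)" unfolding UU using S2 by (simp add: ent_unif)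
    also have "\<dots> = 2 * log 2 m" using m by (simp add: cS2 log_mult)
    finally show ?thesis .
  qed
  have Zc: "map_pmf h Z = map_pmf (\<lambda>(a,b). h (a, b, (a + b) mod m)) (pair_pmf U U)" for h :: "nat \<times> nat \<times> nat \<Rightarrow> 'x"
    unfolding Z_def map_pmf_comp by (rule map_pmf_cong) auto
  have "map_pmf (\<lambda>a. fst a) Z = map_pmf fst (pair_pmf U U)"
    unfolding Zc by (rule map_pmf_cong) auto
  then show "shannon_entropy (map_pmf (\<lambda>a. fst a) Z) = log 2 m" by (simp add: map_fst_pair_pmf HU)
  have "map_pmf (\<lambda>a. fst (snd a)) Z = map_pmf snd (pair_pmf U U)"
    unfolding Zc by (rule map_pmf_cong) auto
  then show "shannon_entropy (map_pmf (\<lambda>a. fst (snd a)) Z) = log 2 m" by (simp add: map_snd_pair_pmf HU)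
  define g where "g = (\<lambda>(a::nat,b::nat). (a, (a + b) mod m))"
  have ginj: "inj_on g S2"
  proof (rule inj_onI)
    fix x y assume "x \<in> S2" "y \<in> S2" "g x = g y"
    moreover obtain a b c d where "x = (a,b)" "y = (c,d)" by force
    ultimately show "x = y" unfolding g_def S2_def M_def
      using modcancel[of a b m d] by auto
  qed
  have gS: "g ` S2 = S2"
  proof (rule card_subset_eq)
    show "g ` S2 \<subseteq> S2" using m by (auto simp: g_def S2_def M_def)
    show "card (g ` S2) = card S2" using ginj by (simp add: card_image)
  qed (use S2 in auto)
  have "map_pmf (\<lambda>a. snd (snd a)) Z = map_pmf snd (map_pmf g (pair_pmf U U))"
    unfolding Zc g_def map_pmf_comp by (rule map_pmf_cong) auto
  also have "map_pmf g (pair_pmf U U) = pair_pmf U U" unfolding UU using S2 ginj by (simp add: map_pmf_of_set_inj gS)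
  also have "map_pmf snd (pair_pmf U U) = U" by (rule map_snd_pair_pmf)
  finally show "shannon_entropy (map_pmf (\<lambda>a. snd (snd a)) Z) = log 2 m" by (simp add: HU)
  show "shannon_entropy (map_pmf (\<lambda>a. (fst a, fst (snd a))) Z) = 2 * log 2 m"
    unfolding Zc by (rule inj2) (auto simp: inj_on_def)
  show "shannon_entropy (map_pmf (\<lambda>a. (fst a, snd (snd a))) Z) = 2 * log 2 m"
    unfolding Zc by (rule inj2) (use ginj in \<open>simp add: g_def\<close>)
  have inj23: "inj_on (\<lambda>(a,b). (b, (a + b) mod m)) S2"
  proof (rule inj_onI)
    fix x y assume "x \<in> S2" "y \<in> S2" "(\<lambda>(a,b). (b, (a + b) mod m)) x = (\<lambda>(a,b). (b, (a + b) mod m)) y"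
    moreover obtain a b c d where "x = (a,b)" "y = (c,d)" by force
    ultimately show "x = y" unfolding S2_def M_def
      using modcancel[of b a m c] by (auto simp: add.commute)
  qed
  show "shannon_entropy (map_pmf (\<lambda>a. snd a) Z) = 2 * log 2 m"
    unfolding Zc by (rule inj2) (use inj23 in simp)
  show "shannon_entropy Z = 2 * log 2 m"
    unfolding Z_def by (rule inj2) (auto simp: inj_on_def)
qed


lemma inj_to_nat2: "inj (\<lambda>((a1::'a::countable, a3::'b::countable), (z1::'c::countable, z3::'d::countable)). (to_nat (a1, z1), to_nat (a3, z3)))"
  by (auto simp: inj_def)

theorem corollary1:
  shows "Theta_in \<subseteq> Theta \<inter> Gamma3_star"
proof
  fix x assume "x \<in> Theta_in"
  then obtain l1 l2 l3 and m :: nat where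
    x: "x = l1 *\<^sub>R e1 + l2 *\<^sub>R e2 + l3 *\<^sub>R e3 + log 2 (real m) *\<^sub>R e123'"
    and l: "l1 \<ge> 0" "l2 \<ge> 0" "l3 \<ge> 0" and m: "m \<ge> 1"
    by (auto simp: Theta_in_def)
  define L where "L = log 2 (real m)"
  have L: "L \<ge> 0" using m by (simp add: L_def)
  have "x \<in> Theta" unfolding Theta_def x using l L L_def by blast
  moreover have "x \<in> Gamma3_star"
  proof -
    obtain A1 :: "bool list pmf" where A1: "finite (set_pmf A1)" "shannon_entropy A1 = l1"
      using ent_exists[OF l(1)] by blast
    obtain A2 :: "bool list pmf" where A2: "finite (set_pmf A2)" "shannon_entropy A2 = l2"
      using ent_exists[OF l(2)] by blast
    obtain A3 :: "bool list pmf" where A3: "finite (set_pmf A3)" "shannon_entropy A3 = l3"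
      using ent_exists[OF l(3)] by blast
    define A where "A = pair_pmf A1 (pair_pmf A2 A3)"
    define U where "U = pmf_of_set {0..<m}"
    define Z where "Z = map_pmf (\<lambda>(a,b). (a, b, (a + b) mod m)) (pair_pmf U U)"
    define F where "F = (\<lambda>(a :: bool list \<times> bool list \<times> bool list, z :: nat \<times> nat \<times> nat).
       (to_nat (fst a, fst z), to_nat (fst (snd a), fst (snd z)), to_nat (snd (snd a), snd (snd z))))"
    define p where "p = map_pmf F (pair_pmf A Z)"
    note AM = A_marg[OF A1(1) A2(1) A3(1), folded A_def]
    note ZM = Z_marg[OF m, folded U_def, folded Z_def]
    have fA: "finite (set_pmf A)" using A1 A2 A3 by (simp add: A_def)
    have fU: "finite (set_pmf U)" using m by (simp add: U_def)
    have fZ: "finite (set_pmf Z)" using fU by (simp add: Z_def)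
    have fp: "finite (set_pmf p)" using fA fZ by (simp add: p_def)
    have mp: "map_pmf q p = map_pmf (q \<circ> F) (pair_pmf A Z)" for q :: "nat \<times> nat \<times> nat \<Rightarrow> 'x"
      by (simp add: p_def pmf.map_comp)
    have h1: "shannon_entropy (map_pmf (\<lambda>(x,y,z). x) p) = l1 + L"
      unfolding mp
      by (subst ent_split[where f=to_nat and g="\<lambda>a. fst a" and h="\<lambda>a. fst a"])
         (auto simp: F_def fA fZ AM ZM A1 L_def)
    have h2: "shannon_entropy (map_pmf (\<lambda>(x,y,z). y) p) = l2 + L"
      unfolding mp
      by (subst ent_split[where f=to_nat and g="\<lambda>a. fst (snd a)" and h="\<lambda>a. fst (snd a)"])
         (auto simp: F_def fA fZ AM ZM A2 L_def)
    have h3: "shannon_entropy (map_pmf (\<lambda>(x,y,z). z) p) = l3 + L"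
      unfolding mp
      by (subst ent_split[where f=to_nat and g="\<lambda>a. snd (snd a)" and h="\<lambda>a. snd (snd a)"])
         (auto simp: F_def fA fZ AM ZM A3 L_def)
    have h12: "shannon_entropy (map_pmf (\<lambda>(x,y,z). (x,y)) p) = l1 + l2 + 2 * L"
      unfolding mp
      by (subst ent_split[where f="\<lambda>((a1, a3), (z1, z3)). (to_nat (a1, z1), to_nat (a3, z3))"
            and g="\<lambda>a. (fst a, fst (snd a))" and h="\<lambda>a. (fst a, fst (snd a))"])
         (auto simp: F_def fA fZ AM ZM A1 A2 L_def inj_to_nat2)
    have h13: "shannon_entropy (map_pmf (\<lambda>(x,y,z). (x,z)) p) = l1 + l3 + 2 * L"
      unfolding mp
      by (subst ent_split[where f="\<lambda>((a1, a3), (z1, z3)). (to_nat (a1, z1), to_nat (a3, z3))"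
            and g="\<lambda>a. (fst a, snd (snd a))" and h="\<lambda>a. (fst a, snd (snd a))"])
         (auto simp: F_def fA fZ AM ZM A1 A3 L_def inj_to_nat2)
    have h23: "shannon_entropy (map_pmf (\<lambda>(x,y,z). (y,z)) p) = l2 + l3 + 2 * L"
      unfolding mp
      by (subst ent_split[where f="\<lambda>((a1, a3), (z1, z3)). (to_nat (a1, z1), to_nat (a3, z3))"
            and g="\<lambda>a. snd a" and h="\<lambda>a. snd a"])
         (auto simp: F_def fA fZ AM ZM A2 A3 L_def inj_to_nat2)
    have inj3: "inj (\<lambda>((a1::bool list, a2::bool list, a3::bool list), (z1::nat, z2::nat, z3::nat)).
        (to_nat (a1, z1), to_nat (a2, z2), to_nat (a3, z3)))"
      by (auto simp: inj_def)
    have h123: "shannon_entropy p = l1 + l2 + l3 + 2 * L"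
      unfolding p_def
      by (subst ent_split[where f="\<lambda>((a1, a2, a3), (z1, z2, z3)). (to_nat (a1, z1), to_nat (a2, z2), to_nat (a3, z3))"
            and g="\<lambda>a. a" and h="\<lambda>a. a"])
         (auto simp: F_def fA fZ AM ZM A1 A2 A3 L_def inj3)
    have ev: "entropy_vector p = x"
      unfolding entropy_vector_def h1 h2 h3 h12 h13 h23 h123 x L_def
      by (simp add: vec_eq_iff vector_def e1_def e2_def e3_def e123'_def)
    have "all_finite_entropy p"
      unfolding all_finite_entropy_def using fp by (auto intro!: fin_ent)
    then show ?thesis using ev unfolding Gamma3_star_def by blast
  qed
  ultimately show "x \<in> Theta \<inter> Gamma3_star" by blast
qed

end
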